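(* Let $\pi$ be an entanglement swapping protocol for the quantum switch model in the context. Let $L(\mathbf u)=\sum_{i,j\in\mathcal K}u_{ij}^2$ for $\mathbf u\in\mathbb N^{K\times K}$ and $\Delta_T^\pi(\mathbf u,t)=\mathbb E[L(\mathbf U(t+T))-L(\mathbf u)\mid \mathbf U(t)=\mathbf u]$, where $\mathbf U(t)=(U_{ij}(t))_{i,j}$. Suppose there exist a positive integer $T$, an integer $J\in\{0,1,\dots,T-1\}$ and positive constants $C$ and $\{\theta_{ij}\}_{i,j\in\mathcal K}$ such that for all time slots $t\in\{mT+J:m=0,1,2,\dots\}$ and all $\mathbf u$, $$\Delta_T^\pi(\mathbf u,t)\le C-\sum_{i,j\in\mathcal K}\theta_{ij}u_{ij},$$ and suppose $\mathbb E[L(\mathbf U(j))]<\infty$ for $j=0,1,\dots,J$. Then the quantum switch is stable under $\pi$.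
   Context: Quantum switch model. There are $K$ end nodes $\mathcal K=\{1,\dots,K\}$ and a switch (node $0$); time is slotted, $t=0,1,2,\dots$; pair-indexed quantities are symmetric in $(i,j)$. In slot $t$: (i) $C_{0i}(t)\in\{0,1\}$ EPR pairs are generated between the switch and node $i$, where $\{C_{0i}(t)\}_{t\ge0}$ are mutually independent Bernoulli processes (i.i.d. in $t$) with mean $p_i$. (ii) The switch chooses nonnegative integers $F_{ij}(t)=F_{ji}(t)$ (entanglement swaps for pair $(i,j)$, each consuming one stored switch–$i$ and one stored switch–$j$ pair) with $\sum_iF_{ij}(t)\le E_{0j}(t)$ and $\sum_{i,j}F_{ij}(t)\le W$; each swap succeeds independently with probability $q$; $R_{ij}(t)$ is the number of successes. (iii) $A_{ij}(t)\in\mathbb N$ new requests for pair $(i,j)$ arrive. Dynamics: $U_{ij}(t+1)=[U_{ij}(t)-E_{ij}(t)-R_{ij}(t)]^++A_{ij}(t)$, $E_{ij}(t+1)=[E_{ij}(t)+R_{ij}(t)-U_{ij}(t)]^+$, $E_{0i}(t+1)=E_{0i}(t)-\sum_jF_{ij}(t)+C_{0i}(t)$, with zero initial values; $U_{ij}$ = pending requests, $E_{ij}$ = stored $i$–$j$ pairs, $E_{0i}$ = stored switch–$i$ pairs; memory unlimited, no decoherence. Requests: $\{A_{ij}(t)\}_t$ mutually independent across pairs, each stationary ergodic with rate $\lambda_{ij}$, and $\mathbb E[A_{ij}(t)^2\mid H(t)=h]\le A_{\max}^2$ for every $t,i,j$ and realization $h$ of the history $H(t)=(E_{ij}(\tau),U_{ij}(\tau),A_{ij}(\tau),R_{ij}(\tau),C_{0i}(\tau))_{\tau=0}^{t-1}$.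 A protocol is a causal (possibly randomized) rule choosing the $F_{ij}(t)$. The switch is stable if for all $i,j$, $g_{ij}(V)=\limsup_{t\to\infty}\frac1t\sum_{\tau=0}^{t-1}\mathbb P[U_{ij}(\tau)>V]\to0$ as $V\to\infty$. *)

theory Defs
  imports "HOL-Probability.Probability"
begin

text \<open>End nodes are the elements of a finite linearly ordered
type 'k (so K = CARD('k)); the switch is node 0 and quantities E_{0i} are
represented by the separate process E0. Arguments: time t, then node indices, then omega.\<close>

type_synonym seqspace = "(nat \<Rightarrow> nat) measure"

definition seqS :: seqspace where
  "seqS = Pi\<^sub>M UNIV (\<lambda>_. count_space (UNIV :: nat set))"

definition hist_event ::
  "'a measure \<Rightarrow> (nat \<Rightarrow> 'k \<Rightarrow> 'a \<Rightarrow> nat) \<Rightarrow> (nat \<Rightarrow> 'k \<Rightarrow> 'k \<Rightarrow> 'a \<Rightarrow> nat) \<Rightarrow>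
   (nat \<Rightarrow> 'k \<Rightarrow> 'k \<Rightarrow> 'a \<Rightarrow> nat) \<Rightarrow> (nat \<Rightarrow> 'k \<Rightarrow> 'k \<Rightarrow> 'a \<Rightarrow> nat) \<Rightarrow>
   (nat \<Rightarrow> 'k \<Rightarrow> 'k \<Rightarrow> 'a \<Rightarrow> nat) \<Rightarrow> nat \<Rightarrow> 'a \<Rightarrow> 'a set" where
  "hist_event M C R A U E t \<omega>0 =
     {\<omega> \<in> space M. \<forall>\<tau><t.
        (\<forall>i j. E \<tau> i j \<omega> = E \<tau> i j \<omega>0 \<and> U \<tau> i j \<omega> = U \<tau> i j \<omega>0 \<and>
               A \<tau> i j \<omega> = A \<tau> i j \<omega>0 \<and> R \<tau> i j \<omega> = R \<tau> i j \<omega>0) \<and>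
        (\<forall>i. C \<tau> i \<omega> = C \<tau> i \<omega>0)}"

definition stationary_ergodic :: "'a measure \<Rightarrow> (nat \<Rightarrow> 'a \<Rightarrow> nat) \<Rightarrow> real \<Rightarrow> bool" where
  "stationary_ergodic M X r \<longleftrightarrow>
     (\<forall>s. distr M seqS (\<lambda>\<omega> n. X (n + s) \<omega>) = distr M seqS (\<lambda>\<omega> n. X n \<omega>)) \<and>
     (\<forall>B \<in> sets seqS. (\<lambda>x n. x (Suc n)) -` B \<inter> space seqS = B \<longrightarrow>
          measure M {\<omega> \<in> space M. (\<lambda>n. X n \<omega>) \<in> B} \<in> {0, 1}) \<and>
     r = prob_space.expectation M (\<lambda>\<omega>. real (X 0 \<omega>))"

text \<open>All standing assumptions of the quantum switch model (for a run of some protocol):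
C = C_{0i}, F, R, A, U, E pair-indexed, E0 = E_{0i}; parameters p, W, Amax, lam.\<close>
definition quantum_switch ::
  "'a measure \<Rightarrow> ('k::{finite,linorder} \<Rightarrow> real) \<Rightarrow> nat \<Rightarrow> real \<Rightarrow> ('k \<Rightarrow> 'k \<Rightarrow> real) \<Rightarrow>
   (nat \<Rightarrow> 'k \<Rightarrow> 'a \<Rightarrow> nat) \<Rightarrow> (nat \<Rightarrow> 'k \<Rightarrow> 'k \<Rightarrow> 'a \<Rightarrow> nat) \<Rightarrow>
   (nat \<Rightarrow> 'k \<Rightarrow> 'k \<Rightarrow> 'a \<Rightarrow> nat) \<Rightarrow> (nat \<Rightarrow> 'k \<Rightarrow> 'k \<Rightarrow> 'a \<Rightarrow> nat) \<Rightarrow>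
   (nat \<Rightarrow> 'k \<Rightarrow> 'k \<Rightarrow> 'a \<Rightarrow> nat) \<Rightarrow> (nat \<Rightarrow> 'k \<Rightarrow> 'k \<Rightarrow> 'a \<Rightarrow> nat) \<Rightarrow>
   (nat \<Rightarrow> 'k \<Rightarrow> 'a \<Rightarrow> nat) \<Rightarrow> bool" where
  "quantum_switch M p W Amax lam C F R A U E E0 \<longleftrightarrow>
     prob_space M \<and>
     \<comment> \<open>all quantities are random variables\<close>
     (\<forall>t i. C t i \<in> measurable M (count_space UNIV) \<and> E0 t i \<in> measurable M (count_space UNIV)) \<and>
     (\<forall>t i j. F t i j \<in> measurable M (count_space UNIV) \<and> R t i j \<in> measurable M (count_space UNIV) \<and>
              A t i j \<in> measurable M (count_space UNIV) \<and> U t i j \<in> measurable M (count_space UNIV) \<and>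
              E t i j \<in> measurable M (count_space UNIV)) \<and>
     \<comment> \<open>symmetry of pair-indexed quantities\<close>
     (\<forall>t i j \<omega>. F t i j \<omega> = F t j i \<omega> \<and> R t i j \<omega> = R t j i \<omega> \<and> A t i j \<omega> = A t j i \<omega> \<and>
                U t i j \<omega> = U t j i \<omega> \<and> E t i j \<omega> = E t j i \<omega>) \<and>
     \<comment> \<open>EPR generation: independent Bernoulli, i.i.d. in t, mean p i\<close>
     (\<forall>t i \<omega>. C t i \<omega> \<in> {0, 1}) \<and>
     prob_space.indep_vars M (\<lambda>_. count_space UNIV) (\<lambda>(t, i). C t i) UNIV \<and>
     (\<forall>t i. measure M {\<omega> \<in> space M. C t i \<omega> = 1} = p i) \<and>
     \<comment> \<open>swap constraints and successes\<close>
     (\<forall>t j \<omega>. (\<Sum>i\<in>UNIV. F t i j \<omega>) \<le> E0 t j \<omega>) \<and>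
     (\<forall>t \<omega>. (\<Sum>i\<in>UNIV. \<Sum>j\<in>UNIV. F t i j \<omega>) \<le> W) \<and>
     (\<forall>t i j \<omega>. R t i j \<omega> \<le> F t i j \<omega>) \<and>
     \<comment> \<open>dynamics (nat subtraction is the positive part) and zero initial values\<close>
     (\<forall>i j \<omega>. U 0 i j \<omega> = 0 \<and> E 0 i j \<omega> = 0) \<and> (\<forall>i \<omega>. E0 0 i \<omega> = 0) \<and>
     (\<forall>t i j \<omega>. U (Suc t) i j \<omega> = (U t i j \<omega> - E t i j \<omega> - R t i j \<omega>) + A t i j \<omega>) \<and>
     (\<forall>t i j \<omega>. E (Suc t) i j \<omega> = (E t i j \<omega> + R t i j \<omega>) - U t i j \<omega>) \<and>
     (\<forall>t i \<omega>. E0 (Suc t) i \<omega> = E0 t i \<omega> - (\<Sum>j\<in>UNIV. F t i j \<omega>) + C t i \<omega>) \<and>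
     \<comment> \<open>requests: independent across (unordered) pairs, stationary ergodic with rate lam\<close>
     prob_space.indep_vars M (\<lambda>_. seqS) (\<lambda>(i, j) \<omega> n. A n i j \<omega>) {(i, j). i \<le> j} \<and>
     (\<forall>i j. stationary_ergodic M (\<lambda>n. A n i j) (lam i j)) \<and>
     \<comment> \<open>conditional second moment bound given the history H(t)\<close>
     (\<forall>t i j \<omega>0. \<omega>0 \<in> space M \<longrightarrow>
        (\<integral>\<^sup>+ \<omega>. ennreal (real (A t i j \<omega>) ^ 2) * indicator (hist_event M C R A U E t \<omega>0) \<omega> \<partial>M)
          \<le> ennreal (Amax ^ 2) * emeasure M (hist_event M C R A U E t \<omega>0))"

definition lyap :: "('k::finite \<Rightarrow> 'k \<Rightarrow> nat) \<Rightarrow> real" where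
  "lyap u = (\<Sum>i\<in>UNIV. \<Sum>j\<in>UNIV. real (u i j) ^ 2)"

definition switch_stable :: "'a measure \<Rightarrow> (nat \<Rightarrow> 'k \<Rightarrow> 'k \<Rightarrow> 'a \<Rightarrow> nat) \<Rightarrow> bool" where
  "switch_stable M U \<longleftrightarrow>
     (\<forall>i j. ((\<lambda>V::real. limsup (\<lambda>t::nat. ereal ((1 / real t) *
          (\<Sum>\<tau><t. measure M {\<omega> \<in> space M. real (U \<tau> i j \<omega>) > V}))))
        \<longlongrightarrow> 0) at_top)"

end

theory Submission imports Defs "HOL-Library.Countable" begin

lemma part_sum:
  fixes X :: "'a \<Rightarrow> 'b::countable" and f :: "'a \<Rightarrow> ennreal"
  assumes S: "\<And>u. {\<omega>\<in>space M. X \<omega> = u} \<in> sets M" and f: "f \<in> borel_measurable M"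
  shows "(\<integral>\<^sup>+u. (\<integral>\<^sup>+\<omega>. f \<omega> * indicator {\<omega>\<in>space M. X \<omega> = u} \<omega> \<partial>M) \<partial>count_space UNIV) = (\<integral>\<^sup>+\<omega>. f \<omega> \<partial>M)"
proof -
  have "(\<integral>\<^sup>+u. (\<integral>\<^sup>+\<omega>. f \<omega> * indicator {\<omega>\<in>space M. X \<omega> = u} \<omega> \<partial>M) \<partial>count_space UNIV)
      = (\<integral>\<^sup>+\<omega>. (\<integral>\<^sup>+u. f \<omega> * indicator {\<omega>\<in>space M. X \<omega> = u} \<omega> \<partial>count_space UNIV) \<partial>M)"
    by (rule nn_integral_count_space_nn_integral[symmetric]) (use S f in auto)
  also have "\<dots> = (\<integral>\<^sup>+\<omega>. f \<omega> \<partial>M)"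
  proof (rule nn_integral_cong)
    fix \<omega> assume w: "\<omega> \<in> space M"
    have "(\<integral>\<^sup>+u. f \<omega> * indicator {\<omega>\<in>space M. X \<omega> = u} \<omega> \<partial>count_space UNIV)
        = (\<integral>\<^sup>+u. f \<omega> * indicator {X \<omega>} u \<partial>count_space UNIV)"
      using w by (intro nn_integral_cong) (auto simp: indicator_def)
    also have "\<dots> = f \<omega>" by (subst nn_integral_cmult_indicator) auto
    finally show "(\<integral>\<^sup>+u. f \<omega> * indicator {\<omega>\<in>space M. X \<omega> = u} \<omega> \<partial>count_space UNIV) = f \<omega>" .
  qed
  finally show ?thesis .
qed

lemma part_sum2:
  fixes X :: "'a \<Rightarrow> 'b::countable" and g :: "'b \<Rightarrow> ennreal"
  assumes S: "\<And>u. {\<omega>\<in>space M. X \<omega> = u} \<in> sets M" and f: "(\<lambda>\<omega>. g (X \<omega>)) \<in> borel_measurable M"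
  shows "(\<integral>\<^sup>+u. g u * emeasure M {\<omega>\<in>space M. X \<omega> = u} \<partial>count_space UNIV) = (\<integral>\<^sup>+\<omega>. g (X \<omega>) \<partial>M)"
proof -
  have "(\<integral>\<^sup>+u. g u * emeasure M {\<omega>\<in>space M. X \<omega> = u} \<partial>count_space UNIV)
     = (\<integral>\<^sup>+u. (\<integral>\<^sup>+\<omega>. g (X \<omega>) * indicator {\<omega>\<in>space M. X \<omega> = u} \<omega> \<partial>M) \<partial>count_space UNIV)"
  proof (rule nn_integral_cong)
    fix u
    have "(\<integral>\<^sup>+\<omega>. g (X \<omega>) * indicator {\<omega>\<in>space M. X \<omega> = u} \<omega> \<partial>M)
       = (\<integral>\<^sup>+\<omega>. g u * indicator {\<omega>\<in>space M. X \<omega> = u} \<omega> \<partial>M)"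
      by (intro nn_integral_cong) (auto simp: indicator_def)
    also have "\<dots> = g u * emeasure M {\<omega>\<in>space M. X \<omega> = u}"
      using S by (rule nn_integral_cmult_indicator)
    finally show "g u * emeasure M {\<omega>\<in>space M. X \<omega> = u} = (\<integral>\<^sup>+\<omega>. g (X \<omega>) * indicator {\<omega>\<in>space M. X \<omega> = u} \<omega> \<partial>M)" by simp
  qed
  also have "\<dots> = (\<integral>\<^sup>+\<omega>. g (X \<omega>) \<partial>M)" by (rule part_sum[OF S f])
  finally show ?thesis .
qed

lemma sum_lessThan_plus: "(\<Sum>\<tau><a+T. f \<tau>) = (\<Sum>\<tau><a. f \<tau>) + (\<Sum>k<T. f (a+k)) " for f :: "nat \<Rightarrow> 'b::comm_monoid_add"
  by (induction T) (simp_all add: add.assoc)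

lemma sum_blocks: "(\<Sum>\<tau><J+n*T. f \<tau>) = (\<Sum>\<tau><J. f \<tau>) + (\<Sum>m<n. \<Sum>k<T. f (m*T+J+k))" for f :: "nat \<Rightarrow> 'b::comm_monoid_add"
proof (induction n)
  case (Suc n)
  have "J + Suc n * T = (J + n*T) + T" by simp
  then show ?case using Suc by (simp only: sum_lessThan_plus sum.lessThan_Suc) (simp add: ac_simps)
qed simp

lemma test_sets:
  fixes U :: "nat \<Rightarrow> 'k::finite \<Rightarrow> 'k \<Rightarrow> 'a \<Rightarrow> nat"
  assumes [measurable]: "\<And>t i j. U t i j \<in> measurable M (count_space UNIV)"
  shows "{\<omega>\<in>space M. (\<lambda>i j. U t i j \<omega>) = u} \<in> sets M"
proof -
  have "{\<omega>\<in>space M. (\<lambda>i j. U t i j \<omega>) = u} = {\<omega>\<in>space M. \<forall>i j. U t i j \<omega> = u i j}"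
    by (auto simp: fun_eq_iff)
  also have "\<dots> \<in> sets M" by measurable
  finally show ?thesis .
qed

lemma test_meas:
  fixes A :: "nat \<Rightarrow> 'a \<Rightarrow> nat"
  assumes [measurable]: "\<And>t. A t \<in> measurable M (count_space UNIV)"
  shows "(\<lambda>\<omega> n. A (n+r) \<omega>) \<in> measurable M seqS" "(\<lambda>x. ennreal (real (x (0::nat)))) \<in> borel_measurable seqS"
proof -
  have "(\<lambda>\<omega>. \<lambda>n\<in>UNIV. A (n+r) \<omega>) \<in> measurable M seqS" unfolding seqS_def
    by (rule measurable_restrict) simp
  then show "(\<lambda>\<omega> n. A (n+r) \<omega>) \<in> measurable M seqS" by (simp add: restrict_UNIV)
  show "(\<lambda>x. ennreal (real (x (0::nat)))) \<in> borel_measurable seqS" unfolding seqS_def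
    by measurable
qed

theorem lemma1:
  fixes M :: "'a measure"
    and p :: "'k::{finite,linorder} \<Rightarrow> real" and W :: nat and Amax :: real
    and lam :: "'k \<Rightarrow> 'k \<Rightarrow> real"
    and C :: "nat \<Rightarrow> 'k \<Rightarrow> 'a \<Rightarrow> nat" and E0 :: "nat \<Rightarrow> 'k \<Rightarrow> 'a \<Rightarrow> nat"
    and F R A U E :: "nat \<Rightarrow> 'k \<Rightarrow> 'k \<Rightarrow> 'a \<Rightarrow> nat"
    and T J :: nat and Cst :: real and \<theta> :: "'k \<Rightarrow> 'k \<Rightarrow> real"
  assumes model: "quantum_switch M p W Amax lam C F R A U E E0"
    and T_pos: "T > 0" and J_lt: "J < T"
    and Cst_pos: "Cst > 0" and theta_pos: "\<And>i j. \<theta> i j > 0"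
    and drift: "\<And>m u. measure M {\<omega> \<in> space M. (\<lambda>i j. U (m * T + J) i j \<omega>) = u} > 0 \<Longrightarrow>
        (\<integral>\<^sup>+ \<omega>. ennreal (lyap (\<lambda>i j. U (m * T + J + T) i j \<omega>)) *
                 indicator {\<omega> \<in> space M. (\<lambda>i j. U (m * T + J) i j \<omega>) = u} \<omega> \<partial>M)
        + ennreal (\<Sum>i\<in>UNIV. \<Sum>j\<in>UNIV. \<theta> i j * real (u i j))
              * emeasure M {\<omega> \<in> space M. (\<lambda>i j. U (m * T + J) i j \<omega>) = u}
        \<le> ennreal (lyap u + Cst) * emeasure M {\<omega> \<in> space M. (\<lambda>i j. U (m * T + J) i j \<omega>) = u}"
    and init: "\<And>j. j \<le> J \<Longrightarrow> (\<integral>\<^sup>+ \<omega>. ennreal (lyap (\<lambda>a b. U j a b \<omega>)) \<partial>M) < \<infinity>"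
  shows "switch_stable M U"
proof -
  interpret P: prob_space M using model unfolding quantum_switch_def by simp
  have measU[measurable]: "\<And>t i j. U t i j \<in> measurable M (count_space UNIV)"
    and measA[measurable]: "\<And>t i j. A t i j \<in> measurable M (count_space UNIV)"
    using model unfolding quantum_switch_def by auto
  have setU: "\<And>t u. {\<omega>\<in>space M. (\<lambda>i j. U t i j \<omega>) = u} \<in> sets M"
    by (rule test_sets) simp
  have lyap_nn: "\<And>u. lyap u \<ge> 0" unfolding lyap_def by (intro sum_nonneg) auto
  have measL[measurable]: "\<And>t. (\<lambda>\<omega>. ennreal (lyap (\<lambda>i j. U t i j \<omega>))) \<in> borel_measurable M"
    unfolding lyap_def by measurable
  have measTh[measurable]: "\<And>t. (\<lambda>\<omega>. ennreal (\<Sum>i\<in>UNIV. \<Sum>j\<in>UNIV. \<theta> i j * real (U t i j \<omega>))) \<in> borel_measurable M"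
    by measurable
  define x where "x m = (\<integral>\<^sup>+\<omega>. ennreal (lyap (\<lambda>i j. U (m*T+J) i j \<omega>)) \<partial>M)" for m
  define y where "y m = (\<integral>\<^sup>+\<omega>. ennreal (\<Sum>i\<in>UNIV. \<Sum>j\<in>UNIV. \<theta> i j * real (U (m*T+J) i j \<omega>)) \<partial>M)" for m
  have stepE: "x (Suc m) + y m \<le> x m + ennreal Cst" for m
  proof -
    let ?S = "\<lambda>u. {\<omega> \<in> space M. (\<lambda>i j. U (m * T + J) i j \<omega>) = u}"
    let ?L = "\<lambda>u. (\<integral>\<^sup>+ \<omega>. ennreal (lyap (\<lambda>i j. U (m * T + J + T) i j \<omega>)) * indicator (?S u) \<omega> \<partial>M)"
    let ?Y = "\<lambda>u. ennreal (\<Sum>i\<in>UNIV. \<Sum>j\<in>UNIV. \<theta> i j * real (u i j)) * emeasure M (?S u)"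
    let ?R = "\<lambda>u. ennreal (lyap u + Cst) * emeasure M (?S u)"
    have pt: "?L u + ?Y u \<le> ?R u" for u
    proof (cases "measure M (?S u) > 0")
      case True
      then show ?thesis by (rule drift)
    next
      case False
      then have "measure M (?S u) = 0" using measure_nonneg[of M "?S u"] by linarith
      then have e0: "emeasure M (?S u) = 0" by (simp add: P.emeasure_eq_measure)
      then have "?S u \<in> null_sets M" using setU by (simp add: null_sets_def)
      then have "?L u = 0" by (rule nn_integral_null_set)
      then show ?thesis using e0 by simp
    qed
    have "(\<integral>\<^sup>+u. ?L u + ?Y u \<partial>count_space UNIV) \<le> (\<integral>\<^sup>+u. ?R u \<partial>count_space UNIV)"
      by (intro nn_integral_mono pt)
    moreover have "(\<integral>\<^sup>+u. ?L u + ?Y u \<partial>count_space UNIV) = (\<integral>\<^sup>+u. ?L u \<partial>count_space UNIV) + (\<integral>\<^sup>+u. ?Y u \<partial>count_space UNIV)"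
      by (rule nn_integral_add) auto
    moreover have "(\<integral>\<^sup>+u. ?L u \<partial>count_space UNIV) = x (Suc m)"
    proof -
      have "(\<integral>\<^sup>+u. ?L u \<partial>count_space UNIV) = (\<integral>\<^sup>+ \<omega>. ennreal (lyap (\<lambda>i j. U (m * T + J + T) i j \<omega>)) \<partial>M)"
        by (rule part_sum[OF setU]) measurable
      then show ?thesis unfolding x_def by (simp add: ac_simps)
    qed
    moreover have "(\<integral>\<^sup>+u. ?Y u \<partial>count_space UNIV) = y m"
      unfolding y_def
      by (rule part_sum2[OF setU, where g="\<lambda>u. ennreal (\<Sum>i\<in>UNIV. \<Sum>j\<in>UNIV. \<theta> i j * real (u i j))"]) measurable
    moreover have "(\<integral>\<^sup>+u. ?R u \<partial>count_space UNIV) = x m + ennreal Cst"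
    proof -
      have "(\<integral>\<^sup>+u. ?R u \<partial>count_space UNIV) = (\<integral>\<^sup>+\<omega>. ennreal (lyap (\<lambda>i j. U (m*T+J) i j \<omega>) + Cst) \<partial>M)"
        by (rule part_sum2[OF setU, where g="\<lambda>u. ennreal (lyap u + Cst)"]) (unfold lyap_def, measurable)
      also have "\<dots> = (\<integral>\<^sup>+\<omega>. ennreal (lyap (\<lambda>i j. U (m*T+J) i j \<omega>)) + ennreal Cst \<partial>M)"
        using lyap_nn Cst_pos by (intro nn_integral_cong ennreal_plus) (auto simp: less_imp_le)
      also have "\<dots> = x m + ennreal Cst" unfolding x_def
        by (subst nn_integral_add) (auto simp: P.emeasure_space_1)
      finally show ?thesis .
    qed
    ultimately show ?thesis by simp
  qed
  have stepF: "x n + (\<Sum>m<n. y m) \<le> x 0 + of_nat n * ennreal Cst" for n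
  proof (induction n)
    case (Suc n)
    have "x (Suc n) + (\<Sum>m<Suc n. y m) = (x (Suc n) + y n) + (\<Sum>m<n. y m)" by (simp add: ac_simps)
    also have "\<dots> \<le> (x n + ennreal Cst) + (\<Sum>m<n. y m)" by (intro add_right_mono stepE)
    also have "\<dots> = (x n + (\<Sum>m<n. y m)) + ennreal Cst" by (simp add: ac_simps)
    also have "\<dots> \<le> (x 0 + of_nat n * ennreal Cst) + ennreal Cst" by (intro add_right_mono Suc)
    also have "\<dots> = x 0 + of_nat (Suc n) * ennreal Cst" by (simp add: algebra_simps)
    finally show ?case .
  qed simp
  have x0fin: "x 0 < \<infinity>" unfolding x_def using init[of J] by simp
  show ?thesis unfolding switch_stable_def
  proof (intro allI)
    fix i j
    define a where "a = 1 + Amax^2"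
    have a_nn: "a \<ge> 0" unfolding a_def by simp
    have aA: "(\<integral>\<^sup>+\<omega>. ennreal (real (A r i j \<omega>)) \<partial>M) \<le> ennreal a" for r
    proof -
      have se: "stationary_ergodic M (\<lambda>n. A n i j) (lam i j)"
        using model unfolding quantum_switch_def by blast
      have dd: "distr M seqS (\<lambda>\<omega> n. A (n + r) i j \<omega>) = distr M seqS (\<lambda>\<omega> n. A n i j \<omega>)"
        using se unfolding stationary_ergodic_def by blast
      have m1: "(\<lambda>\<omega> n. A (n+r) i j \<omega>) \<in> measurable M seqS" and m2: "(\<lambda>x. ennreal (real (x (0::nat)))) \<in> borel_measurable seqS"
        using test_meas(1)[of "\<lambda>n. A n i j" M r] test_meas(2)[of "\<lambda>n. A n i j" M] by simp_all
      have m0: "(\<lambda>\<omega> n. A n i j \<omega>) \<in> measurable M seqS"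
        using test_meas(1)[of "\<lambda>n. A n i j" M 0] by simp
      have "(\<integral>\<^sup>+\<omega>. ennreal (real (A r i j \<omega>)) \<partial>M) = (\<integral>\<^sup>+x. ennreal (real (x 0)) \<partial>distr M seqS (\<lambda>\<omega> n. A (n + r) i j \<omega>))"
        using m1 m2 by (subst nn_integral_distr) (auto simp: measurable_distr_eq1)
      also have "\<dots> = (\<integral>\<^sup>+x. ennreal (real (x 0)) \<partial>distr M seqS (\<lambda>\<omega> n. A n i j \<omega>))" by (simp only: dd)
      also have "\<dots> = (\<integral>\<^sup>+\<omega>. ennreal (real (A 0 i j \<omega>)) \<partial>M)"
        using m0 m2 by (subst nn_integral_distr) (auto simp: measurable_distr_eq1)
      also have "\<dots> \<le> (\<integral>\<^sup>+\<omega>. 1 + ennreal (real (A 0 i j \<omega>) ^ 2) \<partial>M)"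
      proof (intro nn_integral_mono)
        fix \<omega>
        have "real (A 0 i j \<omega>) \<le> 1 + real (A 0 i j \<omega>) ^ 2"
        proof -
          have "0 \<le> (real (A 0 i j \<omega>) - 1)^2" by simp
          then show ?thesis unfolding power2_eq_square by (simp add: algebra_simps)
        qed
        then have "ennreal (real (A 0 i j \<omega>)) \<le> ennreal (1 + real (A 0 i j \<omega>) ^ 2)" by (rule ennreal_leI)
        then show "ennreal (real (A 0 i j \<omega>)) \<le> 1 + ennreal (real (A 0 i j \<omega>) ^ 2)"
          by (simp add: ennreal_plus)
      qed
      also have "\<dots> = 1 + (\<integral>\<^sup>+\<omega>. ennreal (real (A 0 i j \<omega>) ^ 2) \<partial>M)"
        by (subst nn_integral_add) (auto simp: P.emeasure_space_1)
      also have "\<dots> \<le> 1 + ennreal (Amax^2)"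
      proof -
        obtain \<omega>0 where w0: "\<omega>0 \<in> space M" using P.not_empty by blast
        have hs: "hist_event M C R A U E 0 \<omega>0 = space M" unfolding hist_event_def by simp
        have "(\<integral>\<^sup>+ \<omega>. ennreal (real (A 0 i j \<omega>) ^ 2) * indicator (hist_event M C R A U E 0 \<omega>0) \<omega> \<partial>M)
          \<le> ennreal (Amax ^ 2) * emeasure M (hist_event M C R A U E 0 \<omega>0)"
          using model w0 unfolding quantum_switch_def by blast
        also have "(\<integral>\<^sup>+ \<omega>. ennreal (real (A 0 i j \<omega>) ^ 2) * indicator (hist_event M C R A U E 0 \<omega>0) \<omega> \<partial>M)
            = (\<integral>\<^sup>+ \<omega>. ennreal (real (A 0 i j \<omega>) ^ 2) \<partial>M)"
          unfolding hs by (intro nn_integral_cong) simp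
        finally show ?thesis unfolding hs by (simp add: P.emeasure_space_1 add_left_mono)
      qed
      also have "\<dots> = ennreal a" unfolding a_def by (simp add: ennreal_plus)
      finally show ?thesis .
    qed
    define g where "g \<tau> = (\<integral>\<^sup>+\<omega>. ennreal (real (U \<tau> i j \<omega>)) \<partial>M)" for \<tau>
    have gstep: "g (s + k) \<le> g s + of_nat k * ennreal a" for s k
    proof (induction k)
      case (Suc k)
      have "g (s + Suc k) \<le> (\<integral>\<^sup>+\<omega>. ennreal (real (U (s+k) i j \<omega>)) + ennreal (real (A (s+k) i j \<omega>)) \<partial>M)"
        unfolding g_def
      proof (intro nn_integral_mono)
        fix \<omega>
        have "U (Suc (s+k)) i j \<omega> = (U (s+k) i j \<omega> - E (s+k) i j \<omega> - R (s+k) i j \<omega>) + A (s+k) i j \<omega>"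
          using model unfolding quantum_switch_def by blast
        then have "U (s + Suc k) i j \<omega> \<le> U (s+k) i j \<omega> + A (s+k) i j \<omega>" by simp
        then show "ennreal (real (U (s + Suc k) i j \<omega>)) \<le> ennreal (real (U (s+k) i j \<omega>)) + ennreal (real (A (s+k) i j \<omega>))"
          by (simp add: ennreal_plus[symmetric] del: ennreal_plus)
      qed
      also have "\<dots> = g (s+k) + (\<integral>\<^sup>+\<omega>. ennreal (real (A (s+k) i j \<omega>)) \<partial>M)"
        unfolding g_def by (subst nn_integral_add) auto
      also have "\<dots> \<le> (g s + of_nat k * ennreal a) + ennreal a" by (intro add_mono Suc aA)
      also have "\<dots> = g s + of_nat (Suc k) * ennreal a" by (simp add: algebra_simps)
      finally show ?case .
    qed simp
    have g0: "g 0 = 0"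
    proof -
      have "U 0 i j \<omega> = 0" for \<omega> using model unfolding quantum_switch_def by simp
      then show ?thesis unfolding g_def by simp
    qed
    have gle: "g \<tau> \<le> of_nat \<tau> * ennreal a" for \<tau> using gstep[of 0 \<tau>] g0 by simp
    define e where "e \<tau> = enn2real (g \<tau>)" for \<tau>
    have g_e: "g \<tau> = ennreal (e \<tau>)" for \<tau>
    proof -
      have "g \<tau> < \<infinity>" using gle[of \<tau>] by (rule le_less_trans) (simp add: ennreal_of_nat_eq_real_of_nat ennreal_mult_less_top)
      then show ?thesis unfolding e_def by simp
    qed
    have e_nn: "e \<tau> \<ge> 0" for \<tau> unfolding e_def by simp
    have th_pos: "\<theta> i j > 0" by (rule theta_pos)
    have stepH: "ennreal (\<theta> i j) * g (m*T+J) \<le> y m" for m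
    proof -
      have "ennreal (\<theta> i j) * g (m*T+J) = (\<integral>\<^sup>+\<omega>. ennreal (\<theta> i j) * ennreal (real (U (m*T+J) i j \<omega>)) \<partial>M)"
        unfolding g_def by (subst nn_integral_cmult) auto
      also have "\<dots> \<le> y m" unfolding y_def
      proof (intro nn_integral_mono)
        fix \<omega>
        let ?h = "\<lambda>i' j'. \<theta> i' j' * real (U (m*T+J) i' j' \<omega>)"
        have hn: "\<And>i' j'. ?h i' j' \<ge> 0" using theta_pos by (simp add: less_imp_le)
        have "?h i j \<le> (\<Sum>j'\<in>UNIV. ?h i j')" by (rule member_le_sum) (use hn in auto)
        also have "\<dots> \<le> (\<Sum>i'\<in>UNIV. \<Sum>j'\<in>UNIV. ?h i' j')"
          by (rule member_le_sum[where f="\<lambda>i'. \<Sum>j'\<in>UNIV. ?h i' j'"]) (use hn in \<open>auto intro: sum_nonneg\<close>)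
        finally have "?h i j \<le> (\<Sum>i'\<in>UNIV. \<Sum>j'\<in>UNIV. ?h i' j')" .
        then show "ennreal (\<theta> i j) * ennreal (real (U (m*T+J) i j \<omega>)) \<le> ennreal (\<Sum>i'\<in>UNIV. \<Sum>j'\<in>UNIV. ?h i' j')"
          using th_pos by (simp add: ennreal_mult[symmetric] ennreal_leI)
      qed
      finally show ?thesis .
    qed
    define x0 where "x0 = enn2real (x 0)"
    have x0_eq: "x 0 = ennreal x0" unfolding x0_def using x0fin by simp
    have x0_nn: "x0 \<ge> 0" unfolding x0_def by simp
    have R3: "\<theta> i j * (\<Sum>m<n. e (m*T+J)) \<le> x0 + real n * Cst" for n
    proof -
      have "ennreal (\<theta> i j * (\<Sum>m<n. e (m*T+J))) = ennreal (\<theta> i j) * (\<Sum>m<n. g (m*T+J))"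
        using th_pos e_nn by (simp add: g_e ennreal_mult sum_nonneg)
      also have "\<dots> = (\<Sum>m<n. ennreal (\<theta> i j) * g (m*T+J))" by (simp add: sum_distrib_left)
      also have "\<dots> \<le> (\<Sum>m<n. y m)" by (intro sum_mono stepH)
      also have "\<dots> \<le> x n + (\<Sum>m<n. y m)" by simp
      also have "\<dots> \<le> x 0 + of_nat n * ennreal Cst" by (rule stepF)
      also have "\<dots> = ennreal (x0 + real n * Cst)"
        using x0_nn Cst_pos by (simp add: x0_eq ennreal_plus ennreal_mult ennreal_of_nat_eq_real_of_nat)
      finally show ?thesis using x0_nn Cst_pos by (subst (asm) ennreal_le_iff) auto
    qed
    have R1: "e (s + k) \<le> e s + real k * a" for s k
    proof -
      have "ennreal (e (s+k)) \<le> ennreal (e s) + of_nat k * ennreal a" using gstep[of s k] by (simp add: g_e)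
      also have "\<dots> = ennreal (e s + real k * a)"
        using e_nn a_nn by (simp add: ennreal_plus ennreal_mult ennreal_of_nat_eq_real_of_nat)
      finally show ?thesis using e_nn a_nn by (subst (asm) ennreal_le_iff) auto
    qed
    have R2: "e \<tau> \<le> real \<tau> * a" for \<tau>
    proof -
      have "e 0 = 0" using g0 g_e[of 0] e_nn[of 0] by simp
      then show ?thesis using R1[of 0 \<tau>] by simp
    qed
    have markov: "measure M {\<omega> \<in> space M. real (U \<tau> i j \<omega>) > V} \<le> e \<tau> / V" if V: "V > 0" for \<tau> V
    proof -
      let ?A = "{\<omega> \<in> space M. real (U \<tau> i j \<omega>) > V}"
      have As: "?A \<in> sets M" by measurable
      have "ennreal (V * measure M ?A) = ennreal V * emeasure M ?A"
        using V by (simp add: P.emeasure_eq_measure ennreal_mult)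
      also have "\<dots> = (\<integral>\<^sup>+\<omega>. ennreal V * indicator ?A \<omega> \<partial>M)" using As by (simp add: nn_integral_cmult_indicator)
      also have "\<dots> \<le> g \<tau>" unfolding g_def
        by (intro nn_integral_mono) (auto simp: indicator_def ennreal_leI less_imp_le)
      also have "\<dots> = ennreal (e \<tau>)" by (rule g_e)
      finally have "V * measure M ?A \<le> e \<tau>" using e_nn by (subst (asm) ennreal_le_iff) auto
      then show ?thesis using V by (simp add: field_simps)
    qed
    define B where "B = \<theta> i j * J * J * a + T * x0 + T * Cst + \<theta> i j * T * T * a"
    have B_nn: "B \<ge> 0" unfolding B_def using th_pos a_nn x0_nn Cst_pos by (simp add: less_imp_le)
    have sumB: "\<theta> i j * (\<Sum>\<tau><t. e \<tau>) \<le> real t * B" if t1: "t \<ge> 1" for t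
    proof -
      have "t * 1 \<le> t * T" using T_pos by (intro mult_le_mono2) simp
      then have "t \<le> J + t*T" by linarith
      then have s1: "(\<Sum>\<tau><t. e \<tau>) \<le> (\<Sum>\<tau><J+t*T. e \<tau>)" by (intro sum_mono2) (auto simp: e_nn)
      have s2: "(\<Sum>\<tau><J+t*T. e \<tau>) = (\<Sum>\<tau><J. e \<tau>) + (\<Sum>m<t. \<Sum>k<T. e (m*T+J+k))" by (rule sum_blocks)
      have s3: "(\<Sum>\<tau><J. e \<tau>) \<le> real J * (real J * a)"
      proof -
        have "(\<Sum>\<tau><J. e \<tau>) \<le> (\<Sum>\<tau><J. real J * a)"
        proof (intro sum_mono)
          fix \<tau> assume "\<tau> \<in> {..<J}"
          then have "real \<tau> * a \<le> real J * a" using a_nn by (intro mult_right_mono) auto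
          then show "e \<tau> \<le> real J * a" using R2[of \<tau>] by linarith
        qed
        then show ?thesis by simp
      qed
      have s4: "(\<Sum>k<T. e (m*T+J+k)) \<le> real T * e (m*T+J) + real T * (real T * a)" for m
      proof -
        have "(\<Sum>k<T. e (m*T+J+k)) \<le> (\<Sum>k<T. e (m*T+J) + real T * a)"
        proof (intro sum_mono)
          fix k assume "k \<in> {..<T}"
          then have "real k * a \<le> real T * a" using a_nn by (intro mult_right_mono) auto
          then show "e (m*T+J+k) \<le> e (m*T+J) + real T * a" using R1[of "m*T+J" k] by linarith
        qed
        then show ?thesis by (simp add: algebra_simps)
      qed
      have s5: "(\<Sum>m<t. \<Sum>k<T. e (m*T+J+k)) \<le> real T * (\<Sum>m<t. e (m*T+J)) + real t * (real T * (real T * a))"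
      proof -
        have "(\<Sum>m<t. \<Sum>k<T. e (m*T+J+k)) \<le> (\<Sum>m<t. real T * e (m*T+J) + real T * (real T * a))"
          by (intro sum_mono s4)
        then show ?thesis by (simp add: sum.distrib sum_distrib_left)
      qed
      let ?SE = "\<Sum>\<tau><t. e \<tau>"
      let ?SM = "\<Sum>m<t. e (m*T+J)"
      have tot: "?SE \<le> real J * (real J * a) + real T * ?SM + real t * (real T * (real T * a))"
        using s1 s2 s3 s5 by linarith
      have "\<theta> i j * ?SE \<le> \<theta> i j * (real J * (real J * a) + real T * ?SM + real t * (real T * (real T * a)))"
        using tot th_pos by (intro mult_left_mono) auto
      also have "\<dots> = \<theta> i j * J * J * a + real T * (\<theta> i j * ?SM) + real t * (\<theta> i j * T * T * a)"
        by (simp add: algebra_simps)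
      also have "\<dots> \<le> \<theta> i j * J * J * a + real T * (x0 + real t * Cst) + real t * (\<theta> i j * T * T * a)"
        using R3[of t] th_pos by (intro add_mono mult_left_mono) (auto simp: less_imp_le)
      also have "\<dots> \<le> real t * B"
      proof -
        have t1': "real t \<ge> 1" using t1 by simp
        have n1: "\<theta> i j * J * J * a \<ge> 0" using th_pos a_nn by simp
        have n2: "real T * x0 \<ge> 0" using x0_nn by simp
        have "\<theta> i j * J * J * a \<le> real t * (\<theta> i j * J * J * a)"
          using n1 t1' mult_right_mono[OF t1' n1] by simp
        moreover have "real T * x0 \<le> real t * (real T * x0)"
          using n2 t1' mult_right_mono[OF t1' n2] by simp
        ultimately show ?thesis unfolding B_def by (simp add: algebra_simps)
      qed
      finally show ?thesis .
    qed
    have bound: "(1 / real t) * (\<Sum>\<tau><t. measure M {\<omega> \<in> space M. real (U \<tau> i j \<omega>) > V}) \<le> B / (\<theta> i j * V)"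
      if V: "V > 0" and t1: "t \<ge> 1" for t V
    proof -
      let ?Q = "\<Sum>\<tau><t. measure M {\<omega> \<in> space M. real (U \<tau> i j \<omega>) > V}"
      have "?Q \<le> (\<Sum>\<tau><t. e \<tau> / V)" by (intro sum_mono markov V)
      also have "\<dots> = (\<Sum>\<tau><t. e \<tau>) / V" by (simp add: sum_divide_distrib)
      finally have "?Q * V \<le> (\<Sum>\<tau><t. e \<tau>)" using V by (simp add: field_simps)
      then have "\<theta> i j * (?Q * V) \<le> \<theta> i j * (\<Sum>\<tau><t. e \<tau>)" using th_pos by (intro mult_left_mono) auto
      also have "\<dots> \<le> real t * B" by (rule sumB[OF t1])
      finally have "\<theta> i j * (?Q * V) \<le> real t * B" .
      then show ?thesis using V th_pos t1 by (simp add: field_simps)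
    qed
    show "((\<lambda>V::real. limsup (\<lambda>t::nat. ereal ((1 / real t) *
          (\<Sum>\<tau><t. measure M {\<omega> \<in> space M. real (U \<tau> i j \<omega>) > V})))) \<longlongrightarrow> 0) at_top"
    proof (rule tendsto_sandwich[where f="\<lambda>_. 0" and h="\<lambda>V. ereal (B / (\<theta> i j * V))"])
      show "\<forall>\<^sub>F V in at_top. (0::ereal) \<le> limsup (\<lambda>t::nat. ereal ((1 / real t) *
          (\<Sum>\<tau><t. measure M {\<omega> \<in> space M. real (U \<tau> i j \<omega>) > V})))"
      proof (intro always_eventually allI)
        fix V :: real
        have "(0::ereal) \<le> liminf (\<lambda>t::nat. ereal ((1 / real t) *
          (\<Sum>\<tau><t. measure M {\<omega> \<in> space M. real (U \<tau> i j \<omega>) > V})))"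
          by (intro Liminf_bounded always_eventually allI) (simp add: sum_nonneg)
        also have "\<dots> \<le> limsup (\<lambda>t::nat. ereal ((1 / real t) *
          (\<Sum>\<tau><t. measure M {\<omega> \<in> space M. real (U \<tau> i j \<omega>) > V})))"
          by (rule Liminf_le_Limsup) simp
        finally show "(0::ereal) \<le> limsup (\<lambda>t::nat. ereal ((1 / real t) *
          (\<Sum>\<tau><t. measure M {\<omega> \<in> space M. real (U \<tau> i j \<omega>) > V})))" .
      qed
      show "\<forall>\<^sub>F V in at_top. limsup (\<lambda>t::nat. ereal ((1 / real t) *
          (\<Sum>\<tau><t. measure M {\<omega> \<in> space M. real (U \<tau> i j \<omega>) > V}))) \<le> ereal (B / (\<theta> i j * V))"
        using eventually_gt_at_top[of "0::real"]
      proof eventually_elim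
        case (elim V)
        show ?case
          by (intro Limsup_bounded eventually_sequentially[THEN iffD2] exI[of _ 1] allI impI)
             (use bound[OF elim] in simp)
      qed
      show "((\<lambda>_. 0::ereal) \<longlongrightarrow> 0) at_top" by simp
      have "((\<lambda>V::real. (B / \<theta> i j) * inverse V) \<longlongrightarrow> (B / \<theta> i j) * 0) at_top"
        by (intro tendsto_mult tendsto_const tendsto_inverse_0_at_top filterlim_ident)
      then have "((\<lambda>V::real. B / (\<theta> i j * V)) \<longlongrightarrow> 0) at_top"
        by (simp add: divide_inverse mult.assoc mult.left_commute)
      then show "((\<lambda>V. ereal (B / (\<theta> i j * V))) \<longlongrightarrow> 0) at_top"
        using tendsto_ereal[of "\<lambda>V::real. B / (\<theta> i j * V)" 0 at_top] by (simp add: zero_ereal_def)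
    qed
  qed
qed

end
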